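(* Let $R$ be a finite commutative ring with identity and let $\mathfrak{m}$ be a maximal ideal of $R$ of maximum size among all maximal ideals. If $R/\mathfrak{m}$ has characteristic $2$, then $$\chi\big(\mathrm{Reg}(\Gamma(R))\big)=\omega\big(\mathrm{Reg}(\Gamma(R))\big)=\frac{|\mathrm{Reg}(R)|}{|R/\mathfrak{m}|-1}.$$
   Context: $Z(R)$ is the set of zero-divisors of $R$ (including $0$) and $\mathrm{Reg}(R)=R\setminus Z(R)$ is the set of regular elements. The total graph $T(\Gamma(R))$ is the simple graph with vertex set $R$ in which distinct $x,y$ are adjacent iff $x+y\in Z(R)$; $\mathrm{Reg}(\Gamma(R))$ is its induced subgraph on $\mathrm{Reg}(R)$. $\chi$ and $\omega$ denote chromatic and clique number. *)

theory Defs
  imports "HOL-Algebra.Algebra"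
begin

definition zero_divisors :: "('a, 'b) ring_scheme \<Rightarrow> 'a set" where
  "zero_divisors R = {x \<in> carrier R. \<exists>y \<in> carrier R. y \<noteq> \<zero>\<^bsub>R\<^esub> \<and> x \<otimes>\<^bsub>R\<^esub> y = \<zero>\<^bsub>R\<^esub>}"

definition regular_elements :: "('a, 'b) ring_scheme \<Rightarrow> 'a set" where
  "regular_elements R = carrier R - zero_divisors R"

definition total_graph_adj :: "('a, 'b) ring_scheme \<Rightarrow> 'a \<Rightarrow> 'a \<Rightarrow> bool" where
  "total_graph_adj R x y \<longleftrightarrow> x \<noteq> y \<and> x \<oplus>\<^bsub>R\<^esub> y \<in> zero_divisors R"

(* Simple graphs given by a vertex set V and a (symmetric, irreflexive) adjacency E *)
definition is_clique :: "'v set \<Rightarrow> ('v \<Rightarrow> 'v \<Rightarrow> bool) \<Rightarrow> 'v set \<Rightarrow> bool" where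
  "is_clique V E K \<longleftrightarrow> K \<subseteq> V \<and> (\<forall>x\<in>K. \<forall>y\<in>K. x \<noteq> y \<longrightarrow> E x y)"

definition clique_number :: "'v set \<Rightarrow> ('v \<Rightarrow> 'v \<Rightarrow> bool) \<Rightarrow> nat" where
  "clique_number V E = Max {card K | K. is_clique V E K}"

definition proper_colouring :: "'v set \<Rightarrow> ('v \<Rightarrow> 'v \<Rightarrow> bool) \<Rightarrow> nat \<Rightarrow> ('v \<Rightarrow> nat) \<Rightarrow> bool" where
  "proper_colouring V E k f \<longleftrightarrow> (\<forall>x\<in>V. f x < k) \<and> (\<forall>x\<in>V. \<forall>y\<in>V. E x y \<longrightarrow> f x \<noteq> f y)"

definition chromatic_number :: "'v set \<Rightarrow> ('v \<Rightarrow> 'v \<Rightarrow> bool) \<Rightarrow> nat" where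
  "chromatic_number V E = (LEAST k. \<exists>f. proper_colouring V E k f)"

definition ring_characteristic :: "('a, 'b) ring_scheme \<Rightarrow> nat" where
  "ring_characteristic S = (if \<exists>n::nat>0. [n] \<cdot>\<^bsub>S\<^esub> \<one>\<^bsub>S\<^esub> = \<zero>\<^bsub>S\<^esub>
                  then (LEAST n::nat. n > 0 \<and> [n] \<cdot>\<^bsub>S\<^esub> \<one>\<^bsub>S\<^esub> = \<zero>\<^bsub>S\<^esub>) else 0)"

end

theory Submission
  imports Defs
begin


context ideal begin

lemma coset_rep:
  assumes c: "c \<in> a_rcosets I" and z: "z \<in> c"
  shows "c = I +> z" "z \<in> carrier R"
proof -
  obtain w where w: "w \<in> carrier R" "c = I +> w" using c unfolding A_RCOSETS_def' by blast
  show "c = I +> z" using a_repr_independence'[of z w] w z by simp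
  show "z \<in> carrier R" using a_elemrcos_carrier[of w z] w z by simp
qed

lemma coset_mem_iff:
  assumes c: "c \<in> a_rcosets I" and z: "z \<in> c" and x: "x \<in> carrier R"
  shows "x \<in> c \<longleftrightarrow> x \<ominus> z \<in> I"
  using coset_rep[OF c z] a_rcos_module_minus[OF ring_axioms, of z x] x by simp

lemma coset_self:
  assumes x: "x \<in> carrier R"
  shows "I +> x \<in> a_rcosets I" "x \<in> I +> x"
  using x a_rcosetsI[of I x] a_rcos_self[of x] a_subset by auto

lemma coset_zero:
  assumes c: "c \<in> a_rcosets I" and x: "x \<in> c" "x \<in> I"
  shows "c = I"
  using coset_rep[OF c x(1)] a_rcos_const[OF x(2)] by simp


lemma coset_sub:
  assumes c: "c \<in> a_rcosets I" shows "c \<subseteq> carrier R"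
  using coset_rep(2)[OF c] by blast

lemma coset_nonempty:
  assumes c: "c \<in> a_rcosets I" shows "\<exists>x. x \<in> c"
proof -
  obtain w where w: "w \<in> carrier R" "c = I +> w" using c unfolding A_RCOSETS_def' by blast
  thus ?thesis using a_rcos_self[of w] by blast
qed

lemma coset_eq:
  assumes c: "c \<in> a_rcosets I" and d: "d \<in> a_rcosets I" and x: "x \<in> c" and y: "y \<in> d"
    and xy: "x \<ominus> y \<in> I"
  shows "c = d"
proof -
  have xc: "x \<in> carrier R" using coset_rep[OF c x] by simp
  have "x \<in> d" using coset_mem_iff[OF d y xc] xy by simp
  thus ?thesis using coset_rep[OF c x] coset_rep[OF d] by simp
qed

end

context cring begin

lemma unit_not_zd:
  assumes "x \<in> Units R" shows "x \<notin> zero_divisors R"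
proof
  assume "x \<in> zero_divisors R"
  then obtain y where y: "y \<in> carrier R" "y \<noteq> \<zero>" "x \<otimes> y = \<zero>"
    unfolding zero_divisors_def by auto
  have "inv x \<otimes> (x \<otimes> y) = y" using assms y(1)
    by (metis Units_closed Units_inv_closed Units_l_inv l_one m_assoc)
  with y show False using assms by (simp add: Units_inv_closed Units_closed)
qed

lemma not_zd_unit:
  assumes fin: "finite (carrier R)" and x: "x \<in> carrier R" and nz: "x \<notin> zero_divisors R"
  shows "x \<in> Units R"
proof -
  have inj: "inj_on (\<lambda>y. x \<otimes> y) (carrier R)"
  proof (rule inj_onI)
    fix y z assume yz: "y \<in> carrier R" "z \<in> carrier R" "x \<otimes> y = x \<otimes> z"
    have "x \<otimes> (y \<ominus> z) = x \<otimes> y \<ominus> x \<otimes> z" using yz x by algebra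
    hence p0: "x \<otimes> (y \<ominus> z) = \<zero>" using yz x by simp
    have c: "y \<ominus> z \<in> carrier R" using yz by simp
    have "y \<ominus> z = \<zero>"
    proof (rule ccontr)
      assume ne: "y \<ominus> z \<noteq> \<zero>"
      have "x \<in> zero_divisors R" unfolding zero_divisors_def using x c ne p0 by blast
      thus False using nz by simp
    qed
    thus "y = z" using yz by simp
  qed
  have "(\<lambda>y. x \<otimes> y) ` carrier R \<subseteq> carrier R" using x by auto
  hence "(\<lambda>y. x \<otimes> y) ` carrier R = carrier R"
    using endo_inj_surj[OF fin _ inj] by blast
  hence "\<one> \<in> (\<lambda>y. x \<otimes> y) ` carrier R" by simp
  then obtain y where y: "y \<in> carrier R" "x \<otimes> y = \<one>" by auto
  show ?thesis using x y m_comm[of x y] unfolding Units_def by auto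
qed

lemma reg_eq_units:
  assumes fin: "finite (carrier R)" shows "regular_elements R = Units R"
proof
  show "regular_elements R \<subseteq> Units R"
    unfolding regular_elements_def using not_zd_unit[OF fin] by blast
  show "Units R \<subseteq> regular_elements R"
    unfolding regular_elements_def using unit_not_zd Units_closed by blast
qed

lemma unit_not_in_proper:
  assumes "ideal I R" "I \<noteq> carrier R" "x \<in> I" shows "x \<notin> Units R"
proof
  assume u: "x \<in> Units R"
  have "inv x \<otimes> x \<in> I" using assms u by (meson Units_inv_closed ideal.I_l_closed)
  hence "\<one> \<in> I" using u by simp
  thus False using assms ideal.one_imp_carrier by blast
qed

lemma nonunit_in_max:
  assumes fin: "finite (carrier R)" and x: "x \<in> carrier R" and nu: "x \<notin> Units R"
  shows "\<exists>J. maximalideal J R \<and> x \<in> J"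
proof -
  define P where "P = {I. ideal I R \<and> x \<in> I \<and> I \<noteq> carrier R}"
  have P0: "PIdl x \<in> P"
  proof -
    have "\<one> \<notin> PIdl x"
    proof
      assume "\<one> \<in> PIdl x"
      then obtain y where "y \<in> carrier R" "\<one> = y \<otimes> x" unfolding cgenideal_def by auto
      hence "x \<in> Units R" using x m_comm[of x y] \<open>y \<in> carrier R\<close> unfolding Units_def by auto
      thus False using nu by simp
    qed
    thus ?thesis unfolding P_def using cgenideal_ideal[OF x] cgenideal_self[OF x] by auto
  qed
  have Pfin: "finite P"
  proof -
    have "P \<subseteq> Pow (carrier R)" by (auto simp: P_def dest: ideal.Icarr)
    thus ?thesis by (rule finite_subset) (simp add: fin)
  qed
  define n where "n = Max (card ` P)"
  have "n \<in> card ` P" unfolding n_def using Pfin P0 by (intro Max_in) auto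
  then obtain I where I: "I \<in> P" "card I = n" by auto
  have big: "\<And>J. J \<in> P \<Longrightarrow> card J \<le> card I"
  proof -
    fix J assume "J \<in> P"
    hence "card J \<le> Max (card ` P)" using Pfin by (intro Max_ge) auto
    thus "card J \<le> card I" using I(2) n_def by simp
  qed
  have "maximalideal I R"
  proof (rule maximalidealI)
    show "ideal I R" "carrier R \<noteq> I" using I unfolding P_def by auto
    fix J assume J: "ideal J R" "I \<subseteq> J" "J \<subseteq> carrier R"
    show "J = I \<or> J = carrier R"
    proof (cases "J = carrier R")
      case False
      hence "J \<in> P" using J I unfolding P_def by auto
      hence "card J \<le> card I" by (rule big)
      moreover have "finite J" using J fin finite_subset by blast
      ultimately have "I = J" using J(2) card_seteq by blast
      thus ?thesis by simp
    qed simp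
  qed
  thus ?thesis using I unfolding P_def by auto
qed

lemma comaximal:
  assumes J: "maximalideal J R" and K: "maximalideal K R" and ne: "J \<noteq> K"
  shows "\<exists>a\<in>J. \<exists>b\<in>K. a \<oplus> b = \<one>"
proof -
  have iJ: "ideal J R" and iK: "ideal K R" using J K maximalideal.axioms(1) by blast+
  have S: "ideal (J <+> K) R" by (rule add_ideals[OF iJ iK])
  have JS: "J \<subseteq> J <+> K"
  proof
    fix a assume "a \<in> J"
    hence "a = a \<oplus> \<zero>" "a \<in> carrier R" using iJ by (auto simp: ideal.Icarr)
    thus "a \<in> J <+> K" using \<open>a \<in> J\<close> additive_subgroup.zero_closed[OF ideal.axioms(1)[OF iK]]
      unfolding set_add_def' by blast
  qed
  have KS: "K \<subseteq> J <+> K"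
  proof
    fix b assume "b \<in> K"
    hence "b = \<zero> \<oplus> b" "b \<in> carrier R" using iK by (auto simp: ideal.Icarr)
    thus "b \<in> J <+> K" using \<open>b \<in> K\<close> additive_subgroup.zero_closed[OF ideal.axioms(1)[OF iJ]]
      unfolding set_add_def' by blast
  qed
  have Ssub: "J <+> K \<subseteq> carrier R" using S by (auto dest: ideal.Icarr)
  have "J <+> K = J \<or> J <+> K = carrier R"
    using maximalideal.I_maximal[OF J S JS Ssub] .
  moreover have "J <+> K \<noteq> J"
  proof
    assume "J <+> K = J"
    hence "K \<subseteq> J" using KS by simp
    moreover have "J \<subseteq> carrier R" using iJ by (auto dest: ideal.Icarr)
    ultimately have "J = K \<or> J = carrier R" using maximalideal.I_maximal[OF K iJ] by blast
    thus False using ne maximalideal.I_notcarr[OF J] by auto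
  qed
  ultimately have "\<one> \<in> J <+> K" by auto
  then obtain a b where ab: "a \<in> J" "b \<in> K" "\<one> = a \<oplus> b" unfolding set_add_def' by blast
  have "a \<oplus> b = \<one>" using ab(3) by simp
  thus ?thesis using ab(1,2) by blast
qed



lemma mem_from_diff:
  assumes I: "ideal I R" and "x \<in> I" "x \<ominus> y \<in> I" "y \<in> carrier R" shows "y \<in> I"
proof -
  have xc: "x \<in> carrier R" using ideal.Icarr[OF I assms(2)] .
  have "y = x \<oplus> \<ominus> (x \<ominus> y)" using xc assms(4) by algebra
  thus ?thesis using assms(2,3) additive_subgroup.a_closed[OF ideal.axioms(1)[OF I]]
      additive_subgroup.a_inv_closed[OF ideal.axioms(1)[OF I]] by metis
qed

lemma sum_iff_diff:
  assumes I: "ideal I R" and two: "\<one> \<oplus> \<one> \<in> I" and x: "x \<in> carrier R" and y: "y \<in> carrier R"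
  shows "x \<oplus> y \<in> I \<longleftrightarrow> x \<ominus> y \<in> I"
proof -
  have t: "(\<one> \<oplus> \<one>) \<otimes> y \<in> I" using ideal.I_r_closed[OF I two y] .
  have e1: "x \<oplus> y = (x \<ominus> y) \<oplus> (\<one> \<oplus> \<one>) \<otimes> y" using x y by algebra
  have e2: "x \<ominus> y = (x \<oplus> y) \<oplus> \<ominus> ((\<one> \<oplus> \<one>) \<otimes> y)" using x y by algebra
  show ?thesis
  proof
    assume "x \<oplus> y \<in> I"
    thus "x \<ominus> y \<in> I" using e2 t additive_subgroup.a_closed[OF ideal.axioms(1)[OF I]]
      additive_subgroup.a_inv_closed[OF ideal.axioms(1)[OF I]] by metis
  next
    assume "x \<ominus> y \<in> I"
    thus "x \<oplus> y \<in> I" using e1 t additive_subgroup.a_closed[OF ideal.axioms(1)[OF I]] by metis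
  qed
qed

lemma idem_elem:
  assumes fM: "finite M" and J: "maximalideal J R" and MK: "\<forall>K\<in>M. maximalideal K R \<and> K \<noteq> J"
  shows "\<exists>e\<in>carrier R. (\<forall>K\<in>M. e \<in> K) \<and> \<one> \<ominus> e \<in> J"
  using fM MK
proof (induction M rule: finite_induct)
  case empty
  have iJ: "ideal J R" using maximalideal.axioms(1)[OF J] .
  have "\<one> \<ominus> \<one> = \<zero>" by (simp add: a_minus_def r_neg)
  moreover have "\<zero> \<in> J" using additive_subgroup.zero_closed[OF ideal.axioms(1)[OF iJ]] .
  ultimately have "\<one> \<ominus> \<one> \<in> J" by (simp only:)
  thus ?case using one_closed by blast
next
  case (insert K M)
  then obtain e where e: "e \<in> carrier R" "\<forall>K\<in>M. e \<in> K" "\<one> \<ominus> e \<in> J" by auto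
  have K: "maximalideal K R" "K \<noteq> J" using insert.prems by auto
  obtain a b where ab: "a \<in> K" "b \<in> J" "a \<oplus> b = \<one>" using comaximal[OF K(1) J K(2)] by blast
  have iK: "ideal K R" using maximalideal.axioms(1)[OF K(1)] .
  have iJ: "ideal J R" using maximalideal.axioms(1)[OF J] .
  have ac: "a \<in> carrier R" using ideal.Icarr[OF iK ab(1)] .
  have bc: "b \<in> carrier R" using ideal.Icarr[OF iJ ab(2)] .
  have eq: "\<one> \<ominus> e \<otimes> a = (\<one> \<ominus> e) \<oplus> e \<otimes> b \<oplus> e \<otimes> (\<one> \<ominus> (a \<oplus> b))"
    using e(1) ac bc by algebra
  have z: "e \<otimes> (\<one> \<ominus> (a \<oplus> b)) = \<zero>" using ab(3) e(1) by (simp add: a_minus_def r_neg)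
  have "\<one> \<ominus> e \<otimes> a = (\<one> \<ominus> e) \<oplus> e \<otimes> b"
    using eq z e(1) bc by simp
  moreover have "e \<otimes> b \<in> J" using ideal.I_l_closed[OF iJ ab(2) e(1)] .
  ultimately have "\<one> \<ominus> e \<otimes> a \<in> J"
    using additive_subgroup.a_closed[OF ideal.axioms(1)[OF iJ] e(3)] by simp
  moreover have "e \<otimes> a \<in> K" using ideal.I_l_closed[OF iK ab(1) e(1)] .
  moreover have "\<forall>K'\<in>M. e \<otimes> a \<in> K'"
  proof
    fix K' assume K'M: "K' \<in> M"
    have iK': "ideal K' R" using insert.prems K'M maximalideal.axioms(1) by blast
    show "e \<otimes> a \<in> K'" using ideal.I_r_closed[OF iK' _ ac] e(2) K'M by blast
  qed
  moreover have "e \<otimes> a \<in> carrier R" using e(1) ac by simp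
  ultimately show ?case by blast
qed

lemma crt:
  assumes fM: "finite M" and MK: "\<forall>K\<in>M. maximalideal K R" and aM: "\<forall>K\<in>M. a K \<in> carrier R"
  shows "\<exists>x\<in>carrier R. \<forall>K\<in>M. x \<ominus> a K \<in> K"
  using fM MK aM
proof (induction M rule: finite_induct)
  case empty
  show ?case by blast
next
  case (insert J M)
  then obtain x' where x': "x' \<in> carrier R" "\<forall>K\<in>M. x' \<ominus> a K \<in> K" by auto
  have J: "maximalideal J R" and aJ: "a J \<in> carrier R" using insert.prems by auto
  have "\<forall>K\<in>M. maximalideal K R \<and> K \<noteq> J" using insert.prems insert.hyps(2) by auto
  then obtain e where e: "e \<in> carrier R" "\<forall>K\<in>M. e \<in> K" "\<one> \<ominus> e \<in> J"
    using idem_elem[OF insert.hyps(1) J] by blast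
  define x where "x = x' \<oplus> e \<otimes> (a J \<ominus> x')"
  have xc: "x \<in> carrier R" unfolding x_def using x' e aJ by simp
  have iJ: "ideal J R" using maximalideal.axioms(1)[OF J] .
  have "x \<ominus> a J = \<ominus> ((\<one> \<ominus> e) \<otimes> (a J \<ominus> x'))"
    unfolding x_def using x'(1) e(1) aJ by algebra
  moreover have "(\<one> \<ominus> e) \<otimes> (a J \<ominus> x') \<in> J"
    using ideal.I_r_closed[OF iJ e(3)] aJ x'(1) by simp
  ultimately have XJ: "x \<ominus> a J \<in> J"
    using additive_subgroup.a_inv_closed[OF ideal.axioms(1)[OF iJ]] by simp
  have "\<forall>K\<in>M. x \<ominus> a K \<in> K"
  proof
    fix K assume KM: "K \<in> M"
    have iK: "ideal K R" using insert.prems KM maximalideal.axioms(1) by blast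
    have aK: "a K \<in> carrier R" using insert.prems KM by auto
    have "x \<ominus> a K = (x' \<ominus> a K) \<oplus> e \<otimes> (a J \<ominus> x')"
      unfolding x_def using x'(1) e(1) aJ aK by algebra
    moreover have "e \<otimes> (a J \<ominus> x') \<in> K"
      using ideal.I_r_closed[OF iK] e(2) KM aJ x'(1) by simp
    moreover have "x' \<ominus> a K \<in> K" using x'(2) KM by blast
    ultimately show "x \<ominus> a K \<in> K"
      using additive_subgroup.a_closed[OF ideal.axioms(1)[OF iK]] by simp
  qed
  thus ?case using XJ xc by blast
qed

end

lemma char2_in_ideal:
  assumes cr: "cring R" and m: "maximalideal m R" and ch: "ring_characteristic (R Quot m) = 2"
  shows "\<one>\<^bsub>R\<^esub> \<oplus>\<^bsub>R\<^esub> \<one>\<^bsub>R\<^esub> \<in> m"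
proof -
  interpret R: cring R by fact
  have im: "ideal m R" using maximalideal.axioms(1)[OF m] .
  define Q where "Q = R Quot m"
  have rQ: "ring Q" unfolding Q_def using ideal.quotient_is_ring[OF im] .
  interpret Q: ring Q by fact
  let ?P = "\<lambda>n::nat. n > 0 \<and> [n] \<cdot>\<^bsub>Q\<^esub> \<one>\<^bsub>Q\<^esub> = \<zero>\<^bsub>Q\<^esub>"
  have ex: "\<exists>n. ?P n"
  proof (rule ccontr)
    assume "\<not> (\<exists>n. ?P n)"
    hence "\<not> (\<exists>n::nat>0. [n] \<cdot>\<^bsub>Q\<^esub> \<one>\<^bsub>Q\<^esub> = \<zero>\<^bsub>Q\<^esub>)" by blast
    hence "ring_characteristic Q = 0" unfolding ring_characteristic_def by (rule if_not_P)
    thus False using ch Q_def by simp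
  qed
  hence "(LEAST n. ?P n) = 2" using ch unfolding ring_characteristic_def Q_def by auto
  hence "?P 2" using LeastI_ex[OF ex] by simp
  hence q: "\<one>\<^bsub>Q\<^esub> \<oplus>\<^bsub>Q\<^esub> \<one>\<^bsub>Q\<^esub> = \<zero>\<^bsub>Q\<^esub>"
    by (simp add: numeral_2_eq_2 add_pow_def Q.add.nat_pow_Suc)
  have hom: "(+>\<^bsub>R\<^esub>) m \<in> ring_hom R Q" unfolding Q_def using ideal.rcos_ring_hom[OF im] .
  have "m +>\<^bsub>R\<^esub> (\<one>\<^bsub>R\<^esub> \<oplus>\<^bsub>R\<^esub> \<one>\<^bsub>R\<^esub>) = \<one>\<^bsub>Q\<^esub> \<oplus>\<^bsub>Q\<^esub> \<one>\<^bsub>Q\<^esub>"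
    using ring_hom_add[OF hom] ring_hom_one[OF hom] by simp
  also have "\<dots> = m" using q unfolding Q_def by (simp add: FactRing_def)
  finally have e: "m +>\<^bsub>R\<^esub> (\<one>\<^bsub>R\<^esub> \<oplus>\<^bsub>R\<^esub> \<one>\<^bsub>R\<^esub>) = m" .
  have "\<one>\<^bsub>R\<^esub> \<oplus>\<^bsub>R\<^esub> \<one>\<^bsub>R\<^esub> \<in> m +>\<^bsub>R\<^esub> (\<one>\<^bsub>R\<^esub> \<oplus>\<^bsub>R\<^esub> \<one>\<^bsub>R\<^esub>)"
    using ideal.coset_self(2)[OF im] by simp
  thus ?thesis using e by simp
qed


context cring begin

lemma main_construction:
  assumes fin: "finite (carrier R)" and m: "maximalideal m R"
    and big: "\<And>n. maximalideal n R \<Longrightarrow> card n \<le> card m"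
    and two: "\<one> \<oplus> \<one> \<in> m"
  shows "\<exists>H. H \<subseteq> Units R \<and> card (Units R) = card H * (card (a_rcosets m) - 1)
           \<and> card (a_rcosets m) \<ge> 2
           \<and> is_clique (Units R) (total_graph_adj R) H
           \<and> (\<exists>f. proper_colouring (Units R) (total_graph_adj R) (card H) f)"
proof -
  have im: "ideal m R" using maximalideal.axioms(1)[OF m] .
  define MX where "MX = {J. maximalideal J R}"
  have fMX: "finite MX"
  proof -
    have "MX \<subseteq> Pow (carrier R)" unfolding MX_def
      by (auto dest: maximalideal.axioms(1) ideal.Icarr)
    thus ?thesis by (rule finite_subset) (simp add: fin)
  qed
  have fRC: "\<And>J. ideal J R \<Longrightarrow> finite (a_rcosets J)"
  proof -
    fix J assume iJ: "ideal J R"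
    have "a_rcosets J \<subseteq> Pow (carrier R)" using ideal.coset_sub[OF iJ] by blast
    thus "finite (a_rcosets J)" by (rule finite_subset) (simp add: fin)
  qed
  define C where "C = a_rcosets m - {m}"
  have fC: "finite C" unfolding C_def using fRC[OF im] by simp
  have mrc: "m \<in> a_rcosets m"
  proof -
    have "m +> \<zero> \<in> a_rcosets m" using ideal.coset_self(1)[OF im zero_closed] .
    moreover have "m +> \<zero> = m" by (rule ideal.coset_zero[OF im ideal.coset_self(1)[OF im zero_closed]
        ideal.coset_self(2)[OF im zero_closed] additive_subgroup.zero_closed[OF ideal.axioms(1)[OF im]]])
    ultimately show ?thesis by simp
  qed
  have cardC: "card C = card (a_rcosets m) - 1" unfolding C_def using mrc fRC[OF im] by simp
  have inj_ex: "\<And>J. maximalideal J R \<Longrightarrow> \<exists>f. f ` C \<subseteq> a_rcosets J - {J} \<and> inj_on f C"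
  proof -
    fix J assume J: "maximalideal J R"
    have iJ: "ideal J R" using maximalideal.axioms(1)[OF J] .
    have lJ: "card (a_rcosets J) * card J = card (carrier R)"
      using a_lagrange[OF fin ideal.axioms(1)[OF iJ]] by (simp add: order_def)
    have lm: "card (a_rcosets m) * card m = card (carrier R)"
      using a_lagrange[OF fin ideal.axioms(1)[OF im]] by (simp add: order_def)
    have cJ: "card J \<le> card m" using big[OF J] .
    have "\<zero> \<in> J" using additive_subgroup.zero_closed[OF ideal.axioms(1)[OF iJ]] .
    moreover have "finite J"
      by (rule finite_subset[OF _ fin]) (use ideal.Icarr[OF iJ] in blast)
    ultimately have pJ: "card J > 0" using card_gt_0_iff by blast
    have ge: "card (a_rcosets m) \<le> card (a_rcosets J)"
    proof (rule ccontr)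
      assume "\<not> ?thesis"
      hence "card (a_rcosets J) < card (a_rcosets m)" by simp
      hence "card (a_rcosets J) * card J < card (a_rcosets m) * card J" using pJ by (rule mult_less_mono1)
      also have "\<dots> \<le> card (a_rcosets m) * card m" using cJ by (rule mult_le_mono2)
      finally show False using lJ lm by simp
    qed
    have Jrc: "J \<in> a_rcosets J"
    proof -
      have "J +> \<zero> \<in> a_rcosets J" using ideal.coset_self(1)[OF iJ zero_closed] .
      moreover have "J +> \<zero> = J" by (rule ideal.coset_zero[OF iJ ideal.coset_self(1)[OF iJ zero_closed]
          ideal.coset_self(2)[OF iJ zero_closed] additive_subgroup.zero_closed[OF ideal.axioms(1)[OF iJ]]])
      ultimately show ?thesis by simp
    qed
    have "card (a_rcosets J - {J}) = card (a_rcosets J) - 1" using Jrc fRC[OF iJ] by simp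
    hence "card C \<le> card (a_rcosets J - {J})" using cardC ge by linarith
    moreover have "finite (a_rcosets J - {J})" using fRC[OF iJ] by simp
    ultimately show "\<exists>f. f ` C \<subseteq> a_rcosets J - {J} \<and> inj_on f C"
      using card_le_inj[OF fC] by blast
  qed
  define phi where "phi J = (SOME f. f ` C \<subseteq> a_rcosets J - {J} \<and> inj_on f C)" for J
  have phi: "\<And>J. maximalideal J R \<Longrightarrow> phi J ` C \<subseteq> a_rcosets J - {J} \<and> inj_on (phi J) C"
    unfolding phi_def using inj_ex by (rule someI_ex) 
  define tgt where "tgt c J = (if J = m then (SOME x. x \<in> c) else if \<one> \<oplus> \<one> \<in> J then (SOME x. x \<in> phi J c) else \<one>)" for c J
  have tgt_m: "\<And>c. c \<in> C \<Longrightarrow> tgt c m \<in> c"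
  proof -
    fix c assume "c \<in> C"
    hence "c \<in> a_rcosets m" unfolding C_def by blast
    then obtain x where "x \<in> c" using ideal.coset_nonempty[OF im] by blast
    moreover have "tgt c m = (SOME x. x \<in> c)" unfolding tgt_def by simp
    ultimately show "tgt c m \<in> c" by (metis someI)
  qed
  have tgt_J: "\<And>c J. c \<in> C \<Longrightarrow> maximalideal J R \<Longrightarrow> J \<noteq> m \<Longrightarrow> \<one> \<oplus> \<one> \<in> J \<Longrightarrow>
      tgt c J \<in> phi J c \<and> phi J c \<in> a_rcosets J - {J}"
  proof -
    fix c J assume c: "c \<in> C" and J: "maximalideal J R" "J \<noteq> m" "\<one> \<oplus> \<one> \<in> J"
    have pc: "phi J c \<in> a_rcosets J - {J}" using phi[OF J(1)] c by blast
    then obtain x where "x \<in> phi J c" using ideal.coset_nonempty[OF maximalideal.axioms(1)[OF J(1)]] by blast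
    moreover have "tgt c J = (SOME x. x \<in> phi J c)" unfolding tgt_def using J by simp
    ultimately show "tgt c J \<in> phi J c \<and> phi J c \<in> a_rcosets J - {J}" using pc by (metis someI)
  qed
  have tgt_c: "\<And>c J. c \<in> C \<Longrightarrow> maximalideal J R \<Longrightarrow> tgt c J \<in> carrier R"
  proof -
    fix c J assume c: "c \<in> C" and J: "maximalideal J R"
    show "tgt c J \<in> carrier R"
    proof (cases "J = m")
      case True thus ?thesis using tgt_m[OF c] ideal.coset_sub[OF im] c unfolding C_def by blast
    next
      case False
      show ?thesis
      proof (cases "\<one> \<oplus> \<one> \<in> J")
        case True
        thus ?thesis using tgt_J[OF c J False True] ideal.coset_sub[OF maximalideal.axioms(1)[OF J]] by blast
      next
        case F2: False thus ?thesis unfolding tgt_def using False by simp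
      qed
    qed
  qed
  define s where "s c = (SOME x. x \<in> carrier R \<and> (\<forall>J\<in>MX. x \<ominus> tgt c J \<in> J))" for c
  have s: "\<And>c. c \<in> C \<Longrightarrow> s c \<in> carrier R \<and> (\<forall>J\<in>MX. s c \<ominus> tgt c J \<in> J)"
  proof -
    fix c assume c: "c \<in> C"
    have "\<exists>x\<in>carrier R. \<forall>J\<in>MX. x \<ominus> tgt c J \<in> J"
      using crt[OF fMX, of "tgt c"] tgt_c[OF c] unfolding MX_def by blast
    thus "s c \<in> carrier R \<and> (\<forall>J\<in>MX. s c \<ominus> tgt c J \<in> J)" unfolding s_def
      by (rule_tac someI_ex) blast
  qed
  have sc: "\<And>c. c \<in> C \<Longrightarrow> s c \<in> carrier R" using s by blast
  have s1: "\<And>c. c \<in> C \<Longrightarrow> s c \<in> c"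
  proof -
    fix c assume c: "c \<in> C"
    have "s c \<ominus> tgt c m \<in> m" using s[OF c] m unfolding MX_def by blast
    thus "s c \<in> c" using ideal.coset_mem_iff[OF im _ tgt_m[OF c] sc[OF c]] c unfolding C_def by blast
  qed
  have s2: "\<And>c J. c \<in> C \<Longrightarrow> maximalideal J R \<Longrightarrow> J \<noteq> m \<Longrightarrow> \<one> \<oplus> \<one> \<in> J \<Longrightarrow> s c \<in> phi J c"
  proof -
    fix c J assume c: "c \<in> C" and J: "maximalideal J R" "J \<noteq> m" "\<one> \<oplus> \<one> \<in> J"
    have "s c \<ominus> tgt c J \<in> J" using s[OF c] J unfolding MX_def by blast
    thus "s c \<in> phi J c" using ideal.coset_mem_iff[OF maximalideal.axioms(1)[OF J(1)] _ _ sc[OF c]]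
        tgt_J[OF c J] by blast
  qed
  have s3: "\<And>c J. c \<in> C \<Longrightarrow> maximalideal J R \<Longrightarrow> J \<noteq> m \<Longrightarrow> \<one> \<oplus> \<one> \<notin> J \<Longrightarrow> s c \<ominus> \<one> \<in> J"
  proof -
    fix c J assume c: "c \<in> C" and J: "maximalideal J R" "J \<noteq> m" "\<one> \<oplus> \<one> \<notin> J"
    have "s c \<ominus> tgt c J \<in> J" using s[OF c] J unfolding MX_def by blast
    moreover have "tgt c J = \<one>" unfolding tgt_def using J by simp
    ultimately show "s c \<ominus> \<one> \<in> J" by simp
  qed
  have nin: "\<And>x J. maximalideal J R \<Longrightarrow> x \<in> J \<Longrightarrow> x \<notin> Units R"
    using unit_not_in_proper maximalideal.axioms(1) maximalideal.I_notcarr by metis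
  have unitI: "\<And>x. x \<in> carrier R \<Longrightarrow> (\<And>J. maximalideal J R \<Longrightarrow> x \<notin> J) \<Longrightarrow> x \<in> Units R"
    using nonunit_in_max[OF fin] by blast
  have onenot: "\<And>J. maximalideal J R \<Longrightarrow> \<one> \<notin> J"
    using ideal.one_imp_carrier maximalideal.axioms(1) maximalideal.I_notcarr by metis
  have Crc: "\<And>c. c \<in> C \<Longrightarrow> c \<in> a_rcosets m" and Cne: "\<And>c. c \<in> C \<Longrightarrow> c \<noteq> m"
    unfolding C_def by auto
  have sU: "\<And>c. c \<in> C \<Longrightarrow> s c \<in> Units R"
  proof -
    fix c assume c: "c \<in> C"
    show "s c \<in> Units R"
    proof (rule unitI[OF sc[OF c]])
      fix J assume J: "maximalideal J R"
      have iJ: "ideal J R" using maximalideal.axioms(1)[OF J] .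
      show "s c \<notin> J"
      proof
        assume sJ: "s c \<in> J"
        show False
        proof (cases "J = m")
          case True
          thus False using ideal.coset_zero[OF im Crc[OF c] s1[OF c]] sJ Cne[OF c] by blast
        next
          case False
          show False
          proof (cases "\<one> \<oplus> \<one> \<in> J")
            case True
            have "phi J c \<in> a_rcosets J" "phi J c \<noteq> J" using tgt_J[OF c J False True] by auto
            thus False using ideal.coset_zero[OF iJ _ s2[OF c J False True] sJ] by blast
          next
            case F2: False
            have "\<one> \<in> J" using mem_from_diff[OF iJ sJ s3[OF c J False F2]] by simp
            thus False using onenot[OF J] by blast
          qed
        qed
      qed
    qed
  qed
  have sP: "\<And>c d. c \<in> C \<Longrightarrow> d \<in> C \<Longrightarrow> c \<noteq> d \<Longrightarrow> s c \<oplus> s d \<in> Units R"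
  proof -
    fix c d assume c: "c \<in> C" and d: "d \<in> C" and cd: "c \<noteq> d"
    show "s c \<oplus> s d \<in> Units R"
    proof (rule unitI)
      show "s c \<oplus> s d \<in> carrier R" using sc[OF c] sc[OF d] by simp
      fix J assume J: "maximalideal J R"
      have iJ: "ideal J R" using maximalideal.axioms(1)[OF J] .
      show "s c \<oplus> s d \<notin> J"
      proof
        assume sJ: "s c \<oplus> s d \<in> J"
        show False
        proof (cases "J = m")
          case True
          hence "s c \<ominus> s d \<in> m" using sum_iff_diff[OF im two sc[OF c] sc[OF d]] sJ by simp
          thus False using ideal.coset_eq[OF im Crc[OF c] Crc[OF d] s1[OF c] s1[OF d]] cd by blast
        next
          case False
          show False
          proof (cases "\<one> \<oplus> \<one> \<in> J")
            case True
            have "s c \<ominus> s d \<in> J" using sum_iff_diff[OF iJ True sc[OF c] sc[OF d]] sJ by simp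
            moreover have "phi J c \<in> a_rcosets J" "phi J d \<in> a_rcosets J"
              using tgt_J[OF c J False True] tgt_J[OF d J False True] by auto
            ultimately have "phi J c = phi J d"
              using ideal.coset_eq[OF iJ _ _ s2[OF c J False True] s2[OF d J False True]] by blast
            thus False using phi[OF J] c d cd unfolding inj_on_def by blast
          next
            case F2: False
            have e: "(s c \<oplus> s d) \<ominus> (\<one> \<oplus> \<one>) = (s c \<ominus> \<one>) \<oplus> (s d \<ominus> \<one>)"
              using sc[OF c] sc[OF d] by algebra
            have "(s c \<ominus> \<one>) \<oplus> (s d \<ominus> \<one>) \<in> J"
              using s3[OF c J False F2] s3[OF d J False F2]
                additive_subgroup.a_closed[OF ideal.axioms(1)[OF iJ]] by blast
            hence "\<one> \<oplus> \<one> \<in> J" using mem_from_diff[OF iJ sJ] e by simp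
            thus False using F2 by blast
          qed
        qed
      qed
    qed
  qed
  define H where "H = {u \<in> Units R. u \<ominus> \<one> \<in> m}"
  have HU: "H \<subseteq> Units R" unfolding H_def by blast
  have H1: "\<And>h c. h \<in> H \<Longrightarrow> c \<in> C \<Longrightarrow> h \<otimes> s c \<in> c"
  proof -
    fix h c assume h: "h \<in> H" and c: "c \<in> C"
    have hc: "h \<in> carrier R" using h unfolding H_def by (simp add: Units_closed)
    have "(h \<otimes> s c) \<ominus> s c = (h \<ominus> \<one>) \<otimes> s c" using hc sc[OF c] by algebra
    moreover have "(h \<ominus> \<one>) \<otimes> s c \<in> m"
      using ideal.I_r_closed[OF im _ sc[OF c]] h unfolding H_def by blast
    ultimately have "(h \<otimes> s c) \<ominus> s c \<in> m" by simp
    thus "h \<otimes> s c \<in> c" using ideal.coset_mem_iff[OF im Crc[OF c] s1[OF c]] hc sc[OF c] by simp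
  qed
  define hu where "hu u = u \<otimes> inv (s (m +> u))" for u
  have dec: "\<And>u. u \<in> Units R \<Longrightarrow> m +> u \<in> C \<and> hu u \<in> H \<and> u = hu u \<otimes> s (m +> u)"
  proof -
    fix u assume u: "u \<in> Units R"
    have uc: "u \<in> carrier R" using u by (simp add: Units_closed)
    have rc: "m +> u \<in> a_rcosets m" and uin: "u \<in> m +> u"
      using ideal.coset_self[OF im uc] by auto
    have "m +> u \<noteq> m"
    proof
      assume "m +> u = m"
      hence "u \<in> m" using uin by simp
      thus False using nin[OF m] u by blast
    qed
    hence cu: "m +> u \<in> C" unfolding C_def using rc by blast
    define sv where "sv = s (m +> u)"
    have svU: "sv \<in> Units R" unfolding sv_def using sU[OF cu] .
    have svc: "sv \<in> carrier R" using svU by (simp add: Units_closed)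
    have ivc: "inv sv \<in> carrier R" using svU by (simp add: Units_inv_closed)
    have d: "u \<ominus> sv \<in> m" using ideal.coset_mem_iff[OF im rc s1[OF cu] uc] uin unfolding sv_def by blast
    have "(u \<ominus> sv) \<otimes> inv sv = u \<otimes> inv sv \<ominus> sv \<otimes> inv sv" using uc svc ivc by algebra
    hence "(u \<ominus> sv) \<otimes> inv sv = u \<otimes> inv sv \<ominus> \<one>" using svU by simp
    moreover have "(u \<ominus> sv) \<otimes> inv sv \<in> m" using ideal.I_r_closed[OF im d ivc] .
    moreover have "u \<otimes> inv sv \<in> Units R" using u svU by (simp add: Units_m_closed Units_inv_Units)
    ultimately have "hu u \<in> H" unfolding hu_def H_def sv_def by simp
    moreover have "hu u \<otimes> s (m +> u) = u"
    proof -
      have "hu u = u \<otimes> inv sv" unfolding hu_def sv_def by simp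
      hence "hu u \<otimes> sv = u \<otimes> (inv sv \<otimes> sv)" using uc svc ivc m_assoc[OF uc ivc svc] by simp
      also have "\<dots> = u" using svU uc by simp
      finally show ?thesis unfolding sv_def .
    qed
    ultimately show "m +> u \<in> C \<and> hu u \<in> H \<and> u = hu u \<otimes> s (m +> u)" using cu by simp
  qed
  define F where "F p = fst p \<otimes> s (snd p)" for p
  have Finj: "inj_on F (H \<times> C)"
  proof (rule inj_onI)
    fix p q assume p: "p \<in> H \<times> C" and q: "q \<in> H \<times> C" and e: "F p = F q"
    obtain h c where pe: "p = (h, c)" "h \<in> H" "c \<in> C" using p by auto
    obtain h' d where qe: "q = (h', d)" "h' \<in> H" "d \<in> C" using q by auto
    have e': "h \<otimes> s c = h' \<otimes> s d" using e pe qe unfolding F_def by simp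
    have x1: "h \<otimes> s c \<in> c" using H1[OF pe(2,3)] .
    have x2: "h \<otimes> s c \<in> d" using H1[OF qe(2,3)] e' by simp
    have xc: "h \<otimes> s c \<in> carrier R" using x1 ideal.coset_sub[OF im Crc[OF pe(3)]] by blast
    have "(h \<otimes> s c) \<ominus> (h \<otimes> s c) = \<zero>" using xc by (simp add: a_minus_def r_neg)
    hence "(h \<otimes> s c) \<ominus> (h \<otimes> s c) \<in> m"
      using additive_subgroup.zero_closed[OF ideal.axioms(1)[OF im]] by simp
    hence cd: "c = d" using ideal.coset_eq[OF im Crc[OF pe(3)] Crc[OF qe(3)] x1 x2] by blast
    have hc: "h \<in> carrier R" "h' \<in> carrier R" using pe(2) qe(2) unfolding H_def by (auto simp: Units_closed)
    have "s c \<otimes> h = s c \<otimes> h'" using e' cd hc sc[OF pe(3)] by (simp add: m_comm)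
    hence "h = h'" using Units_l_cancel[OF sU[OF pe(3)] hc] by simp
    thus "p = q" using pe qe cd by simp
  qed
  have Fimg: "F ` (H \<times> C) = Units R"
  proof
    show "F ` (H \<times> C) \<subseteq> Units R"
      unfolding F_def using HU sU by (auto intro: Units_m_closed)
    show "Units R \<subseteq> F ` (H \<times> C)"
    proof
      fix u assume u: "u \<in> Units R"
      have "(hu u, m +> u) \<in> H \<times> C" "u = F (hu u, m +> u)" using dec[OF u] unfolding F_def by auto
      thus "u \<in> F ` (H \<times> C)" by blast
    qed
  qed
  have fU: "finite (Units R)" by (rule finite_subset[OF _ fin]) (auto simp: Units_closed)
  have fH: "finite H" using finite_subset[OF HU fU] .
  have cardU: "card (Units R) = card H * card C"
  proof -
    have "card (F ` (H \<times> C)) = card (H \<times> C)" using card_image[OF Finj] .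
    thus ?thesis using Fimg by (simp add: card_cartesian_product)
  qed
  have two_cos: "card (a_rcosets m) \<ge> 2"
  proof -
    have r1: "m +> \<one> \<in> a_rcosets m" and o1: "\<one> \<in> m +> \<one>" using ideal.coset_self[OF im one_closed] by auto
    have "m +> \<one> \<noteq> m" using o1 onenot[OF m] by auto
    hence "card {m, m +> \<one>} = 2" by simp
    moreover have "{m, m +> \<one>} \<subseteq> a_rcosets m" using r1 mrc by simp
    ultimately show ?thesis using card_mono[OF fRC[OF im]] by metis
  qed
  have clique: "is_clique (Units R) (total_graph_adj R) H"
    unfolding is_clique_def
  proof (intro conjI HU ballI impI)
    fix x y assume x: "x \<in> H" and y: "y \<in> H" and xy: "x \<noteq> y"
    have xc: "x \<in> carrier R" and yc: "y \<in> carrier R" using x y unfolding H_def by (auto simp: Units_closed)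
    have e: "x \<oplus> y = ((x \<ominus> \<one>) \<oplus> (y \<ominus> \<one>)) \<oplus> (\<one> \<oplus> \<one>)" using xc yc by algebra
    have "(x \<ominus> \<one>) \<oplus> (y \<ominus> \<one>) \<in> m" using x y additive_subgroup.a_closed[OF ideal.axioms(1)[OF im]]
      unfolding H_def by blast
    hence "x \<oplus> y \<in> m" using e two additive_subgroup.a_closed[OF ideal.axioms(1)[OF im]] by metis
    hence "x \<oplus> y \<notin> Units R" using nin[OF m] by blast
    hence "x \<oplus> y \<in> zero_divisors R" using not_zd_unit[OF fin] xc yc by blast
    thus "total_graph_adj R x y" unfolding total_graph_adj_def using xy by simp
  qed
  obtain idx where idx: "bij_betw idx H {0..<card H}" using ex_bij_betw_finite_nat[OF fH] by blast
  define f where "f u = idx (hu u)" for u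
  have col: "proper_colouring (Units R) (total_graph_adj R) (card H) f"
    unfolding proper_colouring_def
  proof (intro conjI ballI impI)
    fix x assume x: "x \<in> Units R"
    show "f x < card H" unfolding f_def using dec[OF x] idx unfolding bij_betw_def by auto
  next
    fix x y assume x: "x \<in> Units R" and y: "y \<in> Units R" and adj: "total_graph_adj R x y"
    show "f x \<noteq> f y"
    proof
      assume fe: "f x = f y"
      have dx: "m +> x \<in> C" "hu x \<in> H" "x = hu x \<otimes> s (m +> x)" using dec[OF x] by auto
      have dy: "m +> y \<in> C" "hu y \<in> H" "y = hu y \<otimes> s (m +> y)" using dec[OF y] by auto
      have he: "hu x = hu y" using fe dx(2) dy(2) idx unfolding f_def bij_betw_def inj_on_def by blast
      have xy: "x \<noteq> y" and zd: "x \<oplus> y \<in> zero_divisors R" using adj unfolding total_graph_adj_def by auto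
      have ne: "m +> x \<noteq> m +> y"
      proof
        assume "m +> x = m +> y"
        hence "x = y" using dx(3) dy(3) he by simp
        thus False using xy by simp
      qed
      have sU2: "s (m +> x) \<oplus> s (m +> y) \<in> Units R" using sP[OF dx(1) dy(1) ne] .
      have hU: "hu x \<in> Units R" using dx(2) HU by blast
      have "x \<oplus> y = hu x \<otimes> (s (m +> x) \<oplus> s (m +> y))"
        using dx(3) dy(3) he Units_closed[OF hU] sc[OF dx(1)] sc[OF dy(1)] by (simp add: r_distr)
      hence "x \<oplus> y \<in> Units R" using Units_m_closed[OF hU sU2] by simp
      thus False using unit_not_zd zd by blast
    qed
  qed
  show ?thesis using HU cardU cardC two_cos clique col by auto
qed

end

theorem theorem20:
  fixes R :: "('a, 'b) ring_scheme" and m :: "'a set"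
  assumes "cring R"
    and "finite (carrier R)"
    and "maximalideal m R"
    and "\<And>n. maximalideal n R \<Longrightarrow> card n \<le> card m"
    and "ring_characteristic (R Quot m) = 2"
  shows "chromatic_number (regular_elements R) (total_graph_adj R)
           = clique_number (regular_elements R) (total_graph_adj R)
         \<and> real (clique_number (regular_elements R) (total_graph_adj R))
           = real (card (regular_elements R)) / (real (card (carrier (R Quot m))) - 1)"
proof -
  interpret cring R by fact
  have two: "\<one>\<^bsub>R\<^esub> \<oplus>\<^bsub>R\<^esub> \<one>\<^bsub>R\<^esub> \<in> m" using char2_in_ideal[OF assms(1,3,5)] .
  obtain H where H: "H \<subseteq> Units R" "card (Units R) = card H * (card (a_rcosets\<^bsub>R\<^esub> m) - 1)"
      "2 \<le> card (a_rcosets\<^bsub>R\<^esub> m)" "is_clique (Units R) (total_graph_adj R) H"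
      "\<exists>f. proper_colouring (Units R) (total_graph_adj R) (card H) f"
    using main_construction[OF assms(2,3,4) two] by blast
  have reg: "regular_elements R = Units R" using reg_eq_units[OF assms(2)] .
  have fV: "finite (Units R)" by (rule finite_subset[OF _ assms(2)]) (auto simp: Units_closed)
  define chi where "chi = chromatic_number (Units R) (total_graph_adj R)"
  have ex: "\<exists>k. \<exists>f. proper_colouring (Units R) (total_graph_adj R) k f" using H(5) by blast
  have chi_col: "\<exists>f. proper_colouring (Units R) (total_graph_adj R) chi f"
    unfolding chi_def chromatic_number_def using LeastI_ex[OF ex] .
  have chi_le: "chi \<le> card H"
    unfolding chi_def chromatic_number_def using H(5) by (rule Least_le)
  have clique_le: "\<And>K. is_clique (Units R) (total_graph_adj R) K \<Longrightarrow> card K \<le> chi"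
  proof -
    fix K assume K: "is_clique (Units R) (total_graph_adj R) K"
    obtain g where g: "proper_colouring (Units R) (total_graph_adj R) chi g" using chi_col by blast
    have KV: "K \<subseteq> Units R" using K unfolding is_clique_def by blast
    have "inj_on g K"
    proof (rule inj_onI)
      fix x y assume x: "x \<in> K" and y: "y \<in> K" and e: "g x = g y"
      show "x = y"
      proof (rule ccontr)
        assume "x \<noteq> y"
        hence "total_graph_adj R x y" using K x y unfolding is_clique_def by blast
        hence "g x \<noteq> g y" using g x y KV unfolding proper_colouring_def by blast
        thus False using e by simp
      qed
    qed
    moreover have "g ` K \<subseteq> {..<chi}" using g KV unfolding proper_colouring_def by auto
    ultimately have "card K \<le> card {..<chi}" by (rule card_inj_on_le) simp
    thus "card K \<le> chi" by simp
  qed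
  define S where "S = {card K | K. is_clique (Units R) (total_graph_adj R) K}"
  have fS: "finite S"
  proof -
    have "S \<subseteq> {..card (Units R)}"
    proof
      fix n assume "n \<in> S"
      then obtain K where "n = card K" "is_clique (Units R) (total_graph_adj R) K" unfolding S_def by blast
      moreover hence "K \<subseteq> Units R" unfolding is_clique_def by blast
      ultimately have "n \<le> card (Units R)" using card_mono[OF fV] by simp
      thus "n \<in> {..card (Units R)}" by simp
    qed
    thus ?thesis by (rule finite_subset) simp
  qed
  have HS: "card H \<in> S" unfolding S_def using H(4) by blast
  have om: "clique_number (Units R) (total_graph_adj R) = card H"
  proof -
    have "Max S \<in> S" using fS HS by (intro Max_in) auto
    then obtain K where "Max S = card K" "is_clique (Units R) (total_graph_adj R) K" unfolding S_def by blast
    hence "Max S \<le> chi" using clique_le by simp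
    moreover have "card H \<le> Max S" using Max_ge[OF fS HS] .
    ultimately have "Max S = card H" using chi_le by simp
    thus ?thesis unfolding clique_number_def S_def by simp
  qed
  have chi_eq: "chi = card H"
  proof -
    have "card H \<le> chi" using clique_le[OF H(4)] .
    thus ?thesis using chi_le by simp
  qed
  have kq: "card (carrier (R Quot m)) = card (a_rcosets\<^bsub>R\<^esub> m)" by (simp add: FactRing_def)
  have r1: "real (card (a_rcosets\<^bsub>R\<^esub> m)) - 1 = real (card (a_rcosets\<^bsub>R\<^esub> m) - 1)" using H(3) by simp
  have pos: "real (card (a_rcosets\<^bsub>R\<^esub> m) - 1) > 0" using H(3) by simp
  have eq: "real (card (Units R)) = real (card H) * real (card (a_rcosets\<^bsub>R\<^esub> m) - 1)" using H(2) by simp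
  have fin_eq: "real (card H) = real (card (Units R)) / (real (card (a_rcosets\<^bsub>R\<^esub> m)) - 1)"
    unfolding r1 using pos eq by (simp add: eq_divide_eq)
  show ?thesis unfolding reg kq chi_def[symmetric] om chi_eq using fin_eq by (rule conjI[OF refl])
qed

end
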